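(* Let $X$ be a compactum with compatible metric $d$, let $n\geq2$, and let $f:X\to X$ be a function. Consider the statements: (1) $f$ is accessible; (2) $F_n(f)$ is accessible; (3) $SF_n(f)$ is accessible. Then (2) implies (1), and (2) implies (3).
   Context: A compactum is a nondegenerate compact, perfect, Hausdorff topological space. $F_n(X)$ is the set of nonempty subsets of $X$ with at most $n$ points, with the Hausdorff metric $d_H$; $F_1(X)=\{\{x\}:x\in X\}$; $F_n(f)(A)=f(A)$. $SF_n(X)=F_n(X)/F_1(X)$ is the quotient collapsing $F_1(X)$ to a point, $q$ the quotient map, $F_X=q(F_1(X))$, and $SF_n(f)(\chi)=q(F_n(f)(q^{-1}(\chi)))$ for $\chi\neq F_X$, $SF_n(f)(F_X)=F_X$. $SF_n(X)$ carries the metric $\rho(\chi_1,\chi_2)=\mathcal{H}^2(F_1(X)\cup q^{-1}(\chi_1),F_1(X)\cup q^{-1}(\chi_2))$, with $\mathcal{H}^2$ the Hausdorff metric on closed subsets of $F_n(X)$ induced by $d_H$. A function $g$ on a metric space $(Z,D)$ is accessible if for every $\varepsilon>0$ and all nonempty open $U,V\subseteq Z$ there exist $x\in U$, $y\in V$ and $m\in\mathbb{N}$ with $D(g^m(x),g^m(y))<\varepsilon$ (with $D=d,d_H,\rho$ for $f,F_n(f),SF_n(f)$). *)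

theory Defs
  imports "HOL-Analysis.Analysis"
begin

definition haus_dist :: "('b \<Rightarrow> 'b \<Rightarrow> real) \<Rightarrow> 'b set \<Rightarrow> 'b set \<Rightarrow> real" where
  "haus_dist D S T =
     max (SUP x\<in>S. INF y\<in>T. D x y) (SUP y\<in>T. INF x\<in>S. D x y)"

definition metric_open_in :: "'b set \<Rightarrow> ('b \<Rightarrow> 'b \<Rightarrow> real) \<Rightarrow> 'b set \<Rightarrow> bool" where
  "metric_open_in Z D U \<longleftrightarrow> U \<subseteq> Z \<and> (\<forall>x\<in>U. \<exists>r>0. \<forall>y\<in>Z. D x y < r \<longrightarrow> y \<in> U)"

definition accessible :: "'b set \<Rightarrow> ('b \<Rightarrow> 'b \<Rightarrow> real) \<Rightarrow> ('b \<Rightarrow> 'b) \<Rightarrow> bool" where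
  "accessible Z D g \<longleftrightarrow>
     (\<forall>\<epsilon>>0. \<forall>U V. metric_open_in Z D U \<and> U \<noteq> {} \<and> metric_open_in Z D V \<and> V \<noteq> {} \<longrightarrow>
        (\<exists>x\<in>U. \<exists>y\<in>V. \<exists>m::nat. m \<ge> 1 \<and> D ((g ^^ m) x) ((g ^^ m) y) < \<epsilon>))"

text \<open>Compactum: nondegenerate compact perfect Hausdorff space (Hausdorff is automatic).\<close>
definition compactum :: "'a::metric_space set \<Rightarrow> bool" where
  "compactum X \<longleftrightarrow> compact X \<and> (\<forall>x\<in>X. x islimpt X) \<and> (\<exists>x\<in>X. \<exists>y\<in>X. x \<noteq> y)"

definition Fn :: "nat \<Rightarrow> 'a set \<Rightarrow> 'a set set" where
  "Fn n X = {A. A \<subseteq> X \<and> A \<noteq> {} \<and> finite A \<and> card A \<le> n}"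

definition F1 :: "'a set \<Rightarrow> 'a set set" where
  "F1 X = {{x} | x. x \<in> X}"

definition dH :: "'a::metric_space set \<Rightarrow> 'a set \<Rightarrow> real" where
  "dH A B = haus_dist dist A B"

definition Fn_map :: "('a \<Rightarrow> 'a) \<Rightarrow> 'a set \<Rightarrow> 'a set" where
  "Fn_map f A = f ` A"

text \<open>The quotient SF_n(X) = F_n(X)/F_1(X). A point of SF_n(X) is represented by its fibre
  q^{-1}(chi) (a subset of F_n(X)): the collapsed point F_X is F_1(X), every other point
  is a singleton {A} with A in F_n(X) - F_1(X).\<close>
definition q :: "'a set \<Rightarrow> 'a set \<Rightarrow> 'a set set" where
  "q X A = (if A \<in> F1 X then F1 X else {A})"

definition SFn :: "nat \<Rightarrow> 'a set \<Rightarrow> 'a set set set" where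
  "SFn n X = q X ` Fn n X"

definition SFn_map :: "'a set \<Rightarrow> ('a \<Rightarrow> 'a) \<Rightarrow> 'a set set \<Rightarrow> 'a set set" where
  "SFn_map X f c = (if c = F1 X then F1 X else q X (Fn_map f (the_elem c)))"

text \<open>The metric rho on SF_n(X); the fibre q^{-1}(chi) is chi itself in this representation.\<close>
definition rho :: "'a::metric_space set \<Rightarrow> 'a set set \<Rightarrow> 'a set set \<Rightarrow> real" where
  "rho X c1 c2 = haus_dist dH (F1 X \<union> c1) (F1 X \<union> c2)"

end

theory Submission
  imports Defs
begin

lemma dH_nonneg:
  assumes "finite A" "A \<noteq> {}" "finite B" "B \<noteq> {}"
  shows "dH A B \<ge> 0"
proof -
  obtain a where a: "a \<in> A" using assms by auto
  have "0 \<le> (INF y\<in>B. dist a y)"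
    using assms by (intro cINF_greatest) auto
  also have "\<dots> \<le> (SUP x\<in>A. INF y\<in>B. dist x y)"
    using assms a by (intro cSUP_upper) auto
  finally show ?thesis unfolding dH_def haus_dist_def by simp
qed

lemma dH_refl:
  assumes "finite A" "A \<noteq> {}"
  shows "dH A A = 0"
proof -
  have inf0: "(INF y\<in>A. dist x y) = 0" if "x \<in> A" for x
  proof (rule antisym)
    show "(INF y\<in>A. dist x y) \<le> 0"
      using cINF_lower[of "\<lambda>y. dist x y" A x] that assms by simp
    show "0 \<le> (INF y\<in>A. dist x y)"
      using assms by (intro cINF_greatest) auto
  qed
  have inf0': "(INF x\<in>A. dist x y) = 0" if "y \<in> A" for y
  proof (rule antisym)
    show "(INF x\<in>A. dist x y) \<le> 0"
      using cINF_lower[of "\<lambda>x. dist x y" A y] that assms by simp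
    show "0 \<le> (INF x\<in>A. dist x y)"
      using assms by (intro cINF_greatest) auto
  qed
  have "(SUP x\<in>A. INF y\<in>A. dist x y) = (SUP x\<in>A. (0::real))"
    using inf0 by (intro SUP_cong) auto
  moreover have "(SUP y\<in>A. INF x\<in>A. dist x y) = (SUP x\<in>A. (0::real))"
    using inf0' by (intro SUP_cong) auto
  ultimately show ?thesis unfolding dH_def haus_dist_def using assms by simp
qed

lemma hd_le:
  assumes nn: "\<And>x y. x \<in> S \<union> {a,b} \<Longrightarrow> y \<in> S \<union> {a,b} \<Longrightarrow> D x y \<ge> 0"
    and rf: "\<And>x. x \<in> S \<Longrightarrow> D x x = 0"
    and ab: "D a b \<ge> 0"
  shows "haus_dist D (S \<union> {a}) (S \<union> {b}) \<le> D a b"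
proof -
  have 1: "(SUP x\<in>S \<union> {a}. INF y\<in>S \<union> {b}. D x y) \<le> D a b"
  proof (rule cSUP_least)
    fix x assume x: "x \<in> S \<union> {a}"
    have bb: "bdd_below ((\<lambda>y. D x y) ` (S \<union> {b}))"
      using nn x by (auto intro!: bdd_belowI[where m=0])
    show "(INF y\<in>S \<union> {b}. D x y) \<le> D a b"
    proof (cases "x \<in> S")
      case True
      then have "(INF y\<in>S \<union> {b}. D x y) \<le> D x x" using bb by (intro cINF_lower) auto
      then show ?thesis using rf True ab by simp
    next
      case False
      then have "x = a" using x by auto
      then show ?thesis using bb cINF_lower[OF bb, of b] by simp
    qed
  qed simp
  have 2: "(SUP y\<in>S \<union> {b}. INF x\<in>S \<union> {a}. D x y) \<le> D a b"
  proof (rule cSUP_least)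
    fix y assume y: "y \<in> S \<union> {b}"
    have bb: "bdd_below ((\<lambda>x. D x y) ` (S \<union> {a}))"
      using nn y by (auto intro!: bdd_belowI[where m=0])
    show "(INF x\<in>S \<union> {a}. D x y) \<le> D a b"
    proof (cases "y \<in> S")
      case True
      then have "(INF x\<in>S \<union> {a}. D x y) \<le> D y y" using bb by (intro cINF_lower) auto
      then show ?thesis using rf True ab by simp
    next
      case False
      then have "y = b" using y by auto
      then show ?thesis using bb cINF_lower[OF bb, of a] by simp
    qed
  qed simp
  show ?thesis unfolding haus_dist_def using 1 2 by simp
qed

lemma Fn_map_pow: "(Fn_map f ^^ m) A = (f ^^ m) ` A"
  by (induction m) (auto simp: Fn_map_def image_comp)

lemma F1_q_union: "F1 X \<union> q X A = F1 X \<union> {A}"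
  unfolding q_def by auto

lemma SFn_map_pow:
  assumes "f ` X \<subseteq> X"
  shows "(SFn_map X f ^^ m) (q X A) = q X ((f ^^ m) ` A)"
proof (induction m)
  case 0 then show ?case by simp
next
  case (Suc m)
  have img: "(f ^^ Suc m) ` A = f ` ((f ^^ m) ` A)" by (simp add: image_comp)
  show ?case
  proof (cases "(f ^^ m) ` A \<in> F1 X")
    case True
    then obtain x where x: "x \<in> X" "(f ^^ m) ` A = {x}" unfolding F1_def by auto
    then have "(f ^^ Suc m) ` A \<in> F1 X" using img assms unfolding F1_def by auto
    then show ?thesis using Suc True unfolding q_def SFn_map_def by simp
  next
    case False
    have "{(f ^^ m) ` A} \<noteq> F1 X" using False by auto
    then show ?thesis using Suc False img unfolding q_def SFn_map_def Fn_map_def by simp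
  qed
qed

lemma rho_q_le:
  assumes "A \<in> Fn n X" "B \<in> Fn n X"
  shows "rho X (q X A) (q X B) \<le> dH A B"
proof -
  have fin: "finite C \<and> C \<noteq> {}" if "C \<in> F1 X \<union> {A, B}" for C
    using that assms unfolding F1_def Fn_def by auto
  show ?thesis unfolding rho_def F1_q_union
  proof (rule hd_le)
    show "0 \<le> dH x y" if "x \<in> F1 X \<union> {A, B}" "y \<in> F1 X \<union> {A, B}" for x y
      using fin[OF that(1)] fin[OF that(2)] by (intro dH_nonneg) auto
    show "dH x x = 0" if "x \<in> F1 X" for x
      using fin[of x] that by (intro dH_refl) auto
    show "0 \<le> dH A B" using fin[of A] fin[of B] by (intro dH_nonneg) auto
  qed
qed

lemma Fn_image:
  assumes "A \<in> Fn n X" "f ` X \<subseteq> X"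
  shows "g ` A \<noteq> {} \<and> finite (g ` A)"
  using assms unfolding Fn_def by auto

lemma part1:
  fixes X :: "'a::metric_space set"
  assumes acc: "accessible (Fn n X) dH (Fn_map f)" and n: "n \<ge> 1"
  shows "accessible X dist f"
  unfolding accessible_def
proof (intro allI impI)
  fix \<epsilon> :: real and U V
  assume e: "\<epsilon> > 0" and UV: "metric_open_in X dist U \<and> U \<noteq> {} \<and> metric_open_in X dist V \<and> V \<noteq> {}"
  define U' where "U' = {A \<in> Fn n X. A \<subseteq> U}"
  define V' where "V' = {A \<in> Fn n X. A \<subseteq> V}"
  have op: "metric_open_in (Fn n X) dH {A \<in> Fn n X. A \<subseteq> W}" if W: "metric_open_in X dist W" for W
    unfolding metric_open_in_def
  proof (intro conjI ballI)
    show "{A \<in> Fn n X. A \<subseteq> W} \<subseteq> Fn n X" by auto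
    fix A assume A: "A \<in> {A \<in> Fn n X. A \<subseteq> W}"
    have "\<forall>a\<in>A. \<exists>r>0. \<forall>y\<in>X. dist a y < r \<longrightarrow> y \<in> W"
      using W A unfolding metric_open_in_def by blast
    then obtain R where R: "\<forall>a\<in>A. R a > 0 \<and> (\<forall>y\<in>X. dist a y < R a \<longrightarrow> y \<in> W)"
      using bchoice[of A "\<lambda>a r. r > 0 \<and> (\<forall>y\<in>X. dist a y < r \<longrightarrow> y \<in> W)"] by blast
    have finA: "finite A" "A \<noteq> {}" using A unfolding Fn_def by auto
    define r where "r = Min (R ` A)"
    have rpos: "r > 0" unfolding r_def using finA R by auto
    show "\<exists>r>0. \<forall>y\<in>Fn n X. dH A y < r \<longrightarrow> y \<in> {A \<in> Fn n X. A \<subseteq> W}"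
    proof (intro exI[of _ r] conjI rpos ballI impI)
      fix B assume B: "B \<in> Fn n X" and d: "dH A B < r"
      have finB: "finite B" "B \<noteq> {}" "B \<subseteq> X" using B unfolding Fn_def by auto
      have "B \<subseteq> W"
      proof
        fix b assume b: "b \<in> B"
        have "(INF x\<in>A. dist x b) \<le> (SUP y\<in>B. INF x\<in>A. dist x y)"
          using finB b by (intro cSUP_upper) auto
        also have "\<dots> \<le> dH A B" unfolding dH_def haus_dist_def by simp
        finally have "(INF x\<in>A. dist x b) < r" using d by simp
        then obtain a where a: "a \<in> A" "dist a b < r"
          using finA by (subst (asm) cINF_less_iff) auto
        have "r \<le> R a" unfolding r_def using finA a by auto
        then show "b \<in> W" using R a finB b by auto
      qed
      then show "B \<in> {A \<in> Fn n X. A \<subseteq> W}" using B by auto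
    qed
  qed
  obtain u where u: "u \<in> U" using UV by auto
  obtain v where v: "v \<in> V" using UV by auto
  have "{u} \<in> U'" "{v} \<in> V'" using u v UV n unfolding U'_def V'_def Fn_def metric_open_in_def by auto
  moreover have "metric_open_in (Fn n X) dH U'" "metric_open_in (Fn n X) dH V'"
    using op UV unfolding U'_def V'_def by auto
  ultimately have "\<exists>x\<in>U'. \<exists>y\<in>V'. \<exists>m::nat. m \<ge> 1 \<and> dH ((Fn_map f ^^ m) x) ((Fn_map f ^^ m) y) < \<epsilon>"
    using acc e unfolding accessible_def by (metis empty_iff)
  then obtain A B m where AB: "A \<in> U'" "B \<in> V'" "m \<ge> 1" "dH ((Fn_map f ^^ m) A) ((Fn_map f ^^ m) B) < \<epsilon>"
    by blast
  have finA: "finite A" "A \<noteq> {}" "A \<subseteq> U" using AB unfolding U'_def Fn_def by auto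
  have finB: "finite B" "B \<noteq> {}" "B \<subseteq> V" using AB unfolding V'_def Fn_def by auto
  obtain a where a: "a \<in> A" using finA by auto
  let ?A = "(f ^^ m) ` A" and ?B = "(f ^^ m) ` B"
  have "(INF y\<in>?B. dist ((f ^^ m) a) y) \<le> (SUP x\<in>?A. INF y\<in>?B. dist x y)"
    using finA a by (intro cSUP_upper) auto
  also have "\<dots> \<le> dH ?A ?B" unfolding dH_def haus_dist_def by simp
  finally have "(INF y\<in>?B. dist ((f ^^ m) a) y) < \<epsilon>" using AB(4) by (simp add: Fn_map_pow)
  then obtain y where y: "y \<in> ?B" "dist ((f ^^ m) a) y < \<epsilon>"
    using finB by (subst (asm) cINF_less_iff) auto
  then obtain b where "b \<in> B" "y = (f ^^ m) b" by auto
  then show "\<exists>x\<in>U. \<exists>y\<in>V. \<exists>m. 1 \<le> m \<and> dist ((f ^^ m) x) ((f ^^ m) y) < \<epsilon>"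
    using y a finA finB AB(3) by blast
qed

lemma part2:
  fixes X :: "'a::metric_space set"
  assumes acc: "accessible (Fn n X) dH (Fn_map f)" and fX: "f ` X \<subseteq> X"
  shows "accessible (SFn n X) (rho X) (SFn_map X f)"
  unfolding accessible_def
proof (intro allI impI)
  fix \<epsilon> :: real and U V
  assume e: "\<epsilon> > 0" and UV: "metric_open_in (SFn n X) (rho X) U \<and> U \<noteq> {} \<and> metric_open_in (SFn n X) (rho X) V \<and> V \<noteq> {}"
  have op: "metric_open_in (Fn n X) dH {A \<in> Fn n X. q X A \<in> W}"
    if W: "metric_open_in (SFn n X) (rho X) W" for W
    unfolding metric_open_in_def
  proof (intro conjI ballI)
    show "{A \<in> Fn n X. q X A \<in> W} \<subseteq> Fn n X" by auto
    fix A assume A: "A \<in> {A \<in> Fn n X. q X A \<in> W}"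
    then obtain r where r: "r > 0" "\<forall>y\<in>SFn n X. rho X (q X A) y < r \<longrightarrow> y \<in> W"
      using W unfolding metric_open_in_def by blast
    show "\<exists>r>0. \<forall>y\<in>Fn n X. dH A y < r \<longrightarrow> y \<in> {A \<in> Fn n X. q X A \<in> W}"
    proof (intro exI[of _ r] conjI r(1) ballI impI)
      fix B assume B: "B \<in> Fn n X" and d: "dH A B < r"
      have "rho X (q X A) (q X B) < r" using rho_q_le[of A n X B] A B d by auto
      moreover have "q X B \<in> SFn n X" using B unfolding SFn_def by auto
      ultimately show "B \<in> {A \<in> Fn n X. q X A \<in> W}" using r B by auto
    qed
  qed
  have ne: "{A \<in> Fn n X. q X A \<in> W} \<noteq> {}" if "W \<noteq> {}" "metric_open_in (SFn n X) (rho X) W" for W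
    using that unfolding metric_open_in_def SFn_def by auto
  have "\<exists>x\<in>{A \<in> Fn n X. q X A \<in> U}. \<exists>y\<in>{A \<in> Fn n X. q X A \<in> V}. \<exists>m::nat. m \<ge> 1 \<and> dH ((Fn_map f ^^ m) x) ((Fn_map f ^^ m) y) < \<epsilon>"
    using acc e op[of U] op[of V] ne[of U] ne[of V] UV unfolding accessible_def by presburger
  then obtain A B m where AB: "A \<in> Fn n X" "q X A \<in> U" "B \<in> Fn n X" "q X B \<in> V" "m \<ge> 1"
     "dH ((Fn_map f ^^ m) A) ((Fn_map f ^^ m) B) < \<epsilon>"
    by blast
  have "(f ^^ m) ` A \<in> Fn n X" "(f ^^ m) ` B \<in> Fn n X"
  proof -
    have fm: "(f ^^ m) ` X \<subseteq> X" for m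
      by (induction m) (use fX in auto)
    have "(f ^^ m) ` A \<subseteq> X" "(f ^^ m) ` B \<subseteq> X"
      using fm[of m] AB unfolding Fn_def by auto
    then show "(f ^^ m) ` A \<in> Fn n X" "(f ^^ m) ` B \<in> Fn n X"
      using AB card_image_le[of A "f ^^ m"] card_image_le[of B "f ^^ m"]
      unfolding Fn_def by (auto intro: order_trans)
  qed
  then have "rho X ((SFn_map X f ^^ m) (q X A)) ((SFn_map X f ^^ m) (q X B)) < \<epsilon>"
    using rho_q_le[OF \<open>(f ^^ m) ` A \<in> Fn n X\<close> \<open>(f ^^ m) ` B \<in> Fn n X\<close>] AB(6)
    by (simp add: SFn_map_pow[OF fX] Fn_map_pow)
  then show "\<exists>x\<in>U. \<exists>y\<in>V. \<exists>m. 1 \<le> m \<and> rho X ((SFn_map X f ^^ m) x) ((SFn_map X f ^^ m) y) < \<epsilon>"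
    using AB by blast
qed

theorem theorem7:
  fixes X :: "'a::metric_space set" and f :: "'a \<Rightarrow> 'a" and n :: nat
  assumes "compactum X"
    and "n \<ge> 2"
    and "f ` X \<subseteq> X"
    and "accessible (Fn n X) dH (Fn_map f)"
  shows "accessible X dist f \<and> accessible (SFn n X) (rho X) (SFn_map X f)"
  using part1[OF assms(4)] part2[OF assms(4,3)] assms(2) by auto

end
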